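(* Consider CRANE run for $K$ iterations with $\beta=c\log(\mathcal{N}_{\mathcal{F}}(\epsilon_{\mathrm b})KH|\mathcal{U}_A|/\delta)$, $\epsilon_{\mathrm b}=1/(KH|\mathcal{U}_A|)$, $\delta\in(0,1]$ and $c$ a suitable absolute constant, on a model class $\mathcal{F}$ containing the true model $f^*$. Then with probability at least $1-\delta/2$, $f^*\in\mathcal{B}^k$ for all $k\in[K]$.
   Context: Process: finite observation space $\mathcal{O}$, finite action space $\mathcal{A}$, horizon $H$; histories $\tau_h=(o_1,a_1,\dots,o_h,a_h)$; policies pick $a_h\sim\pi_h(\cdot\mid\tau_{h-1},o_h)$; reward $r_h(o_h,a_h)$; $V^\pi_f$ is the expected total reward of $\pi$ in model $f$ and $\mathbb{P}^\pi_f(\tau_H)$ the probability of $\tau_H$ under $\pi$ in $f$. $\mathcal{U}_h$ ($h\in[H]$) are given sets of tests (sequences of future observations and actions starting at step $h$) and $\mathcal{U}_{A,h}$ is the set of action sequences occurring in $\mathcal{U}_h$, $|\mathcal{U}_A|=\max_h|\mathcal{U}_{A,h}|$. $\mathcal{F}$ is a class of models (each giving valid trajectory distributions $\mathbb{P}^\pi_f$ for every $\pi$). Bracket number: a size-$N$ $\epsilon$-bracket of $\mathcal{F}$ is $\{(g_1^i,g_2^i)\}_{i=1}^N$ of functions of (policy, trajectory $\tau_H$) with $\sum_{\tau_H}|g_1^i(\pi,\tau_H)-g_2^i(\pi,\tau_H)|\le\epsilon$ for all $\pi,i$, such that each $f\in\mathcal{F}$ has some $i$ with $g_1^i(\pi,\tau_H)\le\mathbb{P}^\pi_f(\tau_H)\le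 g_2^i(\pi,\tau_H)$ for all $\tau_H,\pi$; $\mathcal{N}_{\mathcal{F}}(\epsilon)$ is the minimal $N$. Algorithm CRANE (input $\beta$): $\mathcal{B}^1=\mathcal{F}$, $\mathcal{D}=\emptyset$. For $k=1,\dots,K$: choose $(f^k,\pi^k)\in\arg\max_{f\in\mathcal{B}^k,\pi}V^\pi_f$; for each $h\in\{0,\dots,H-1\}$ and $u_a\in\mathcal{U}_{A,h+1}$, execute the policy that follows $\pi^k$ at steps $1,\dots,h-1$, a uniformly random action at step $h$ (if $h\ge1$), the actions of $u_a$ from step $h+1$, and uniform actions afterwards, adding (this policy, collected $\tau_H$) to $\mathcal{D}$; then $\mathcal{B}^{k+1}=\{f\in\mathcal{F}:\sum_{(\pi,\tau_H)\in\mathcal{D}}\log\mathbb{P}^\pi_f(\tau_H)\ge\max_{f'\in\mathcal{F}}\sum_{(\pi,\tau_H)\in\mathcal{D}}\log\mathbb{P}^\pi_{f'}(\tau_H)-\beta\}$. *)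

theory Defs
  imports "HOL-Probability.Probability" "HOL-Library.List_Lexorder"
begin

text \<open>Observations and actions are encoded as natural numbers; the finite observation
space and action space are explicit finite carrier sets Obs and Act (so that the
absolute constant c can be quantified independently of them).\<close>

type_synonym hist = "(nat \<times> nat) list"
type_synonym policy = "hist \<Rightarrow> nat \<Rightarrow> nat pmf"   \<comment> \<open>pi(tau_{h-1}, o_h), step h = length history + 1\<close>
type_synonym model = "hist \<Rightarrow> nat pmf"             \<comment> \<open>law of o_h given tau_{h-1}\<close>
type_synonym dataset = "(policy \<times> hist) list"

definition valid_policy :: "nat set \<Rightarrow> policy \<Rightarrow> bool" where
  "valid_policy Act \<pi> \<longleftrightarrow> (\<forall>hs ob. set_pmf (\<pi> hs ob) \<subseteq> Act)"

definition valid_model :: "nat set \<Rightarrow> model \<Rightarrow> bool" where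
  "valid_model Obs f \<longleftrightarrow> (\<forall>hs. set_pmf (f hs) \<subseteq> Obs)"

fun traj :: "model \<Rightarrow> policy \<Rightarrow> nat \<Rightarrow> hist pmf" where
  "traj f \<pi> 0 = return_pmf []"
| "traj f \<pi> (Suc n) = traj f \<pi> n \<bind> (\<lambda>hs. f hs \<bind> (\<lambda>ob. \<pi> hs ob \<bind> (\<lambda>a. return_pmf (hs @ [(ob, a)]))))"

definition Pr :: "nat \<Rightarrow> model \<Rightarrow> policy \<Rightarrow> hist \<Rightarrow> real" where
  "Pr H f \<pi> \<tau> = pmf (traj f \<pi> H) \<tau>"

definition Val :: "nat \<Rightarrow> (nat \<Rightarrow> nat \<Rightarrow> nat \<Rightarrow> real) \<Rightarrow> model \<Rightarrow> policy \<Rightarrow> real" where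
  "Val H r f \<pi> = measure_pmf.expectation (traj f \<pi> H)
      (\<lambda>\<tau>. \<Sum>h<length \<tau>. r (Suc h) (fst (\<tau> ! h)) (snd (\<tau> ! h)))"

definition trajs :: "nat set \<Rightarrow> nat set \<Rightarrow> nat \<Rightarrow> hist set" where
  "trajs Obs Act H = {\<tau>. length \<tau> = H \<and> set \<tau> \<subseteq> Obs \<times> Act}"

definition has_bracket ::
  "nat set \<Rightarrow> nat set \<Rightarrow> nat \<Rightarrow> model set \<Rightarrow> real \<Rightarrow> nat \<Rightarrow> bool" where
  "has_bracket Obs Act H F \<epsilon> N \<longleftrightarrow>
    (\<exists>g1 g2 :: nat \<Rightarrow> policy \<Rightarrow> hist \<Rightarrow> real.
       (\<forall>i<N. \<forall>\<pi>. valid_policy Act \<pi> \<longrightarrow>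
           (\<Sum>\<tau>\<in>trajs Obs Act H. \<bar>g1 i \<pi> \<tau> - g2 i \<pi> \<tau>\<bar>) \<le> \<epsilon>) \<and>
       (\<forall>f\<in>F. \<exists>i<N. \<forall>\<pi> \<tau>. valid_policy Act \<pi> \<longrightarrow> \<tau> \<in> trajs Obs Act H \<longrightarrow>
           g1 i \<pi> \<tau> \<le> Pr H f \<pi> \<tau> \<and> Pr H f \<pi> \<tau> \<le> g2 i \<pi> \<tau>))"

definition bracket_num :: "nat set \<Rightarrow> nat set \<Rightarrow> nat \<Rightarrow> model set \<Rightarrow> real \<Rightarrow> nat" where
  "bracket_num Obs Act H F \<epsilon> = (LEAST N. has_bracket Obs Act H F \<epsilon> N)"

definition eln :: "real \<Rightarrow> ereal" where
  "eln x = (if x > 0 then ereal (ln x) else - \<infinity>)"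

definition loglik :: "nat \<Rightarrow> model \<Rightarrow> dataset \<Rightarrow> ereal" where
  "loglik H f D = sum_list (map (\<lambda>(\<pi>, \<tau>). eln (Pr H f \<pi> \<tau>)) D)"

text \<open>Confidence set B built from data D (the max over F is written as a supremum).\<close>
definition conf_set :: "nat \<Rightarrow> model set \<Rightarrow> real \<Rightarrow> dataset \<Rightarrow> model set" where
  "conf_set H F \<beta> D =
     {f \<in> F. loglik H f D \<ge> (SUP f'\<in>F. loglik H f' D) - ereal \<beta>}"

text \<open>Exploration policy: follow pi at steps 1..h-1, uniform action at step h (if h>=1),
the actions of u from step h+1 on, uniform afterwards.\<close>
definition explore :: "nat set \<Rightarrow> policy \<Rightarrow> nat \<Rightarrow> nat list \<Rightarrow> policy" where
  "explore Act \<pi> h u hs ob =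
     (let t = Suc (length hs) in
      if t < h then \<pi> hs ob
      else if t = h then pmf_of_set Act
      else if t - Suc h < length u then return_pmf (u ! (t - Suc h))
      else pmf_of_set Act)"

definition explore_pols ::
  "nat set \<Rightarrow> (nat \<Rightarrow> nat list set) \<Rightarrow> nat \<Rightarrow> policy \<Rightarrow> policy list" where
  "explore_pols Act UA H \<pi> =
     concat (map (\<lambda>h. map (\<lambda>u. explore Act \<pi> h u) (sorted_list_of_set (UA (Suc h)))) [0..<H])"

primrec collect :: "model \<Rightarrow> nat \<Rightarrow> policy list \<Rightarrow> dataset pmf" where
  "collect f H [] = return_pmf []"
| "collect f H (p # ps) =
     traj f p H \<bind> (\<lambda>\<tau>. collect f H ps \<bind> (\<lambda>rest. return_pmf ((p, \<tau>) # rest)))"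

text \<open>Run of CRANE for k iterations in the true model fstar; sel D is the chosen
(f^k, pi^k) given the current data D.  The result is the list [D_0, ..., D_k]
of the data sets after each iteration (D_0 = empty), so B^k = conf_set (D_{k-1}).\<close>
fun crane_run ::
  "nat set \<Rightarrow> (nat \<Rightarrow> nat list set) \<Rightarrow> nat \<Rightarrow> model \<Rightarrow> (dataset \<Rightarrow> model \<times> policy)
     \<Rightarrow> nat \<Rightarrow> dataset list pmf" where
  "crane_run Act UA H fstar sel 0 = return_pmf [[]]"
| "crane_run Act UA H fstar sel (Suc k) =
     crane_run Act UA H fstar sel k \<bind> (\<lambda>Ds.
       collect fstar H (explore_pols Act UA H (snd (sel (last Ds)))) \<bind>
         (\<lambda>new. return_pmf (Ds @ [last Ds @ new])))"

definition UA_size :: "(nat \<Rightarrow> nat list set) \<Rightarrow> nat \<Rightarrow> nat" where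
  "UA_size UA H = Max (insert 0 ((\<lambda>h. card (UA h)) ` {1..H}))"

end

theory Submission
  imports Defs
begin


lemma traj_support:
  assumes "valid_model Obs f" "valid_policy Act \<pi>"
  shows "\<tau> \<in> set_pmf (traj f \<pi> n) \<Longrightarrow> length \<tau> = n \<and> set \<tau> \<subseteq> Obs \<times> Act"
proof (induction n arbitrary: \<tau>)
  case 0 then show ?case by simp
next
  case (Suc n)
  then show ?case using assms unfolding valid_model_def valid_policy_def by fastforce
qed

lemma finite_trajs: "finite Obs \<Longrightarrow> finite Act \<Longrightarrow> finite (trajs Obs Act H)"
  unfolding trajs_def using finite_lists_length_eq[of "Obs \<times> Act" H] by (simp add: conj_commute)

lemma step_bound:
  assumes fin: "finite (trajs Obs Act H)" and vm: "valid_model Obs fs" and vp: "valid_policy Act \<pi>"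
    and nn: "\<And>\<tau>. \<tau> \<in> trajs Obs Act H \<Longrightarrow> 0 \<le> g \<tau>"
    and sm: "(\<Sum>\<tau>\<in>trajs Obs Act H. g \<tau>) \<le> a"
  shows "(\<integral>\<^sup>+\<tau>. ennreal (g \<tau> / Pr H fs \<pi> \<tau>) \<partial>measure_pmf (traj fs \<pi> H)) \<le> ennreal a"
proof -
  have sub: "set_pmf (traj fs \<pi> H) \<subseteq> trajs Obs Act H"
    using traj_support[OF vm vp] unfolding trajs_def by blast
  have "(\<integral>\<^sup>+\<tau>. ennreal (g \<tau> / Pr H fs \<pi> \<tau>) \<partial>measure_pmf (traj fs \<pi> H))
      = (\<Sum>\<tau>\<in>trajs Obs Act H. ennreal (g \<tau> / Pr H fs \<pi> \<tau>) * pmf (traj fs \<pi> H) \<tau>)"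
    using sub by (intro nn_integral_measure_pmf_support[OF fin]) auto
  also have "\<dots> \<le> (\<Sum>\<tau>\<in>trajs Obs Act H. ennreal (g \<tau>))"
  proof (intro sum_mono)
    fix \<tau> assume t: "\<tau> \<in> trajs Obs Act H"
    show "ennreal (g \<tau> / Pr H fs \<pi> \<tau>) * pmf (traj fs \<pi> H) \<tau> \<le> ennreal (g \<tau>)"
    proof (cases "pmf (traj fs \<pi> H) \<tau> = 0")
      case True then show ?thesis by simp
    next
      case False
      then have p: "pmf (traj fs \<pi> H) \<tau> > 0" using pmf_nonneg[of "traj fs \<pi> H" \<tau>] by linarith
      have "ennreal (g \<tau> / Pr H fs \<pi> \<tau>) * pmf (traj fs \<pi> H) \<tau> = ennreal (g \<tau> / Pr H fs \<pi> \<tau> * pmf (traj fs \<pi> H) \<tau>)"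
        by (rule ennreal_mult'[symmetric]) (simp add: Pr_def nn[OF t] p)
      also have "g \<tau> / Pr H fs \<pi> \<tau> * pmf (traj fs \<pi> H) \<tau> = g \<tau>" using p by (simp add: Pr_def)
      finally show ?thesis by simp
    qed
  qed
  also have "\<dots> = ennreal (\<Sum>\<tau>\<in>trajs Obs Act H. g \<tau>)"
    using nn by (simp add: sum_ennreal)
  also have "\<dots> \<le> ennreal a" using sm by (simp add: ennreal_leI)
  finally show ?thesis .
qed

lemma collect_support:
  "D \<in> set_pmf (collect fs H ps) \<Longrightarrow> map fst D = ps \<and> (\<forall>x\<in>set D. snd x \<in> set_pmf (traj fs (fst x) H))"
  by (induction ps arbitrary: D) fastforce+

lemma collect_bound:
  fixes w :: "policy \<Rightarrow> hist \<Rightarrow> ennreal"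
  assumes b: "\<And>p. p \<in> set ps \<Longrightarrow> (\<integral>\<^sup>+\<tau>. w p \<tau> \<partial>measure_pmf (traj fs p H)) \<le> A"
  shows "(\<integral>\<^sup>+D. prod_list (map (\<lambda>(p,\<tau>). w p \<tau>) D) \<partial>measure_pmf (collect fs H ps)) \<le> A ^ length ps"
  using b
proof (induction ps)
  case Nil then show ?case by simp
next
  case (Cons p ps)
  have "(\<integral>\<^sup>+D. prod_list (map (\<lambda>(p,\<tau>). w p \<tau>) D) \<partial>measure_pmf (collect fs H (p#ps)))
     = (\<integral>\<^sup>+\<tau>. w p \<tau> * (\<integral>\<^sup>+D. prod_list (map (\<lambda>(p,\<tau>). w p \<tau>) D) \<partial>measure_pmf (collect fs H ps)) \<partial>measure_pmf (traj fs p H))"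
    by (simp add: nn_integral_cmult)
  also have "\<dots> \<le> (\<integral>\<^sup>+\<tau>. w p \<tau> * A ^ length ps \<partial>measure_pmf (traj fs p H))"
    using Cons by (intro nn_integral_mono mult_left_mono) auto
  also have "\<dots> = (\<integral>\<^sup>+\<tau>. w p \<tau> \<partial>measure_pmf (traj fs p H)) * A ^ length ps"
    by (simp add: nn_integral_multc)
  also have "\<dots> \<le> A * A ^ length ps"
    using Cons by (intro mult_right_mono) auto
  finally show ?case by simp
qed



definition mlen :: "(nat \<Rightarrow> nat list set) \<Rightarrow> nat \<Rightarrow> nat" where
  "mlen UA H = sum_list (map (\<lambda>h. card (UA (Suc h))) [0..<H])"

lemma explore_len: "length (explore_pols Act UA H \<pi>) = mlen UA H"
  by (simp add: explore_pols_def mlen_def length_concat o_def)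

lemma explore_valid:
  assumes "valid_policy Act \<pi>" "finite Act" "Act \<noteq> {}" "set u \<subseteq> Act"
  shows "valid_policy Act (explore Act \<pi> h u)"
  using assms unfolding valid_policy_def explore_def Let_def
  apply (auto simp: set_pmf_of_set)
  by (meson nth_mem subsetD)

lemma explore_pols_valid:
  assumes "valid_policy Act \<pi>" "finite Act" "Act \<noteq> {}" "\<forall>h. finite (UA h) \<and> (\<forall>u\<in>UA h. set u \<subseteq> Act)"
  shows "p \<in> set (explore_pols Act UA H \<pi>) \<Longrightarrow> valid_policy Act p"
  using assms unfolding explore_pols_def by (auto intro!: explore_valid)

lemma crane_support:
  assumes sel: "\<forall>D. valid_policy Act (snd (sel D))" and A: "finite Act" "Act \<noteq> {}"
    and UA: "\<forall>h. finite (UA h) \<and> (\<forall>u\<in>UA h. set u \<subseteq> Act)"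
  shows "Ds \<in> set_pmf (crane_run Act UA H fstar sel j) \<Longrightarrow> length Ds = Suc j \<and> length (last Ds) = j * mlen UA H
     \<and> (\<forall>x\<in>set (last Ds). valid_policy Act (fst x) \<and> snd x \<in> set_pmf (traj fstar (fst x) H))"
proof (induction j arbitrary: Ds)
  case 0 then show ?case by simp
next
  case (Suc j)
  from Suc.prems obtain Ds0 new where D0: "Ds0 \<in> set_pmf (crane_run Act UA H fstar sel j)"
    and nw: "new \<in> set_pmf (collect fstar H (explore_pols Act UA H (snd (sel (last Ds0)))))"
    and Ds: "Ds = Ds0 @ [last Ds0 @ new]" by auto
  note IH = Suc.IH[OF D0]
  note cs = collect_support[OF nw]
  have ln: "length new = mlen UA H" using cs explore_len by (metis length_map)
  have v: "\<forall>x\<in>set new. valid_policy Act (fst x)"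
    using cs explore_pols_valid[OF spec[OF sel] A UA] by (metis list.set_map imageI)
  show ?case using IH cs ln v Ds by auto
qed

lemma crane_bound:
  fixes w :: "policy \<Rightarrow> hist \<Rightarrow> ennreal"
  assumes sel: "\<forall>D. valid_policy Act (snd (sel D))" and A: "finite Act" "Act \<noteq> {}"
    and UA: "\<forall>h. finite (UA h) \<and> (\<forall>u\<in>UA h. set u \<subseteq> Act)"
    and b: "\<And>p. valid_policy Act p \<Longrightarrow> (\<integral>\<^sup>+\<tau>. w p \<tau> \<partial>measure_pmf (traj fstar p H)) \<le> B"
  shows "(\<integral>\<^sup>+Ds. prod_list (map (\<lambda>(p,\<tau>). w p \<tau>) (last Ds)) \<partial>measure_pmf (crane_run Act UA H fstar sel j))
          \<le> B ^ (j * mlen UA H)"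
proof (induction j)
  case 0 then show ?case by simp
next
  case (Suc j)
  let ?W = "\<lambda>D. prod_list (map (\<lambda>(p,\<tau>). w p \<tau>) D)"
  have cb: "(\<integral>\<^sup>+D. ?W D \<partial>measure_pmf (collect fstar H (explore_pols Act UA H (snd (sel D0))))) \<le> B ^ mlen UA H" for D0
    using collect_bound[where ps="explore_pols Act UA H (snd (sel D0))" and w=w and fs=fstar and H=H and A=B]
      b explore_pols_valid[OF spec[OF sel] A UA] explore_len by metis
  have "(\<integral>\<^sup>+Ds. ?W (last Ds) \<partial>measure_pmf (crane_run Act UA H fstar sel (Suc j)))
     = (\<integral>\<^sup>+Ds. ?W (last Ds) * (\<integral>\<^sup>+D. ?W D \<partial>measure_pmf (collect fstar H (explore_pols Act UA H (snd (sel (last Ds)))))) \<partial>measure_pmf (crane_run Act UA H fstar sel j))"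
    by (simp add: nn_integral_cmult)
  also have "\<dots> \<le> (\<integral>\<^sup>+Ds. ?W (last Ds) * B ^ mlen UA H \<partial>measure_pmf (crane_run Act UA H fstar sel j))"
    using cb by (intro nn_integral_mono mult_left_mono) auto
  also have "\<dots> = (\<integral>\<^sup>+Ds. ?W (last Ds) \<partial>measure_pmf (crane_run Act UA H fstar sel j)) * B ^ mlen UA H"
    by (simp add: nn_integral_multc)
  also have "\<dots> \<le> B ^ (j * mlen UA H) * B ^ mlen UA H"
    using Suc by (intro mult_right_mono) auto
  finally show ?case by (simp add: power_add mult.commute)
qed

lemma crane_len:
  "Ds \<in> set_pmf (crane_run Act UA H fstar sel j) \<Longrightarrow> length Ds = Suc j"
  by (induction j arbitrary: Ds) auto

lemma crane_prefix:
  "j \<le> K \<Longrightarrow> map_pmf (\<lambda>Ds. Ds ! j) (crane_run Act UA H fstar sel K) = map_pmf last (crane_run Act UA H fstar sel j)"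
proof (induction K arbitrary: j)
  case 0 then show ?case by simp
next
  case (Suc K)
  show ?case
  proof (cases "j = Suc K")
    case True
    show ?thesis unfolding True
      by (intro map_pmf_cong refl) (auto simp: nth_append dest!: crane_len)
  next
    case False
    then have j: "j \<le> K" using Suc.prems by simp
    have "map_pmf (\<lambda>Ds. Ds ! j) (crane_run Act UA H fstar sel (Suc K)) = map_pmf (\<lambda>Ds. Ds ! j) (crane_run Act UA H fstar sel K)"
    proof -
      have "map_pmf (\<lambda>Ds. Ds ! j) (crane_run Act UA H fstar sel (Suc K)) = crane_run Act UA H fstar sel K \<bind> (\<lambda>x. return_pmf (x ! j))"
        unfolding crane_run.simps map_bind_pmf
        using j by (intro bind_pmf_cong refl) (auto simp: map_bind_pmf nth_append bind_pmf_const dest!: crane_len)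
      then show ?thesis by (simp add: map_pmf_def)
    qed
    then show ?thesis using Suc.IH[OF j] by simp
  qed
qed



lemma sum_eln_pos:
  "(\<forall>x\<in>set D. 0 < P x) \<Longrightarrow> sum_list (map (\<lambda>x. eln (P x)) D) = ereal (ln (prod_list (map P D)))"
proof (induction D)
  case Nil then show ?case by simp
next
  case (Cons a D)
  have "0 < prod_list (map P D)" using Cons.prems by (induction D) auto
  then show ?case using Cons by (simp add: eln_def ln_mult)
qed

lemma sum_eln_zero:
  "(\<forall>x\<in>set D. 0 \<le> P x) \<Longrightarrow> (\<exists>x\<in>set D. P x = 0) \<Longrightarrow> sum_list (map (\<lambda>x. eln (P x)) D) = -\<infinity>"
proof (induction D)
  case Nil then show ?case by simp
next
  case (Cons a D)
  have nf: "sum_list (map (\<lambda>x. eln (P x)) D) \<noteq> \<infinity>"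
  proof (induction D)
    case Nil then show ?case by simp
  next
    case (Cons b D) then show ?case by (simp add: eln_def)
  qed
  show ?case
  proof (cases "P a = 0")
    case True then show ?thesis using nf by (simp add: eln_def)
  next
    case False
    then have "0 < P a" using Cons.prems by force
    then show ?thesis using Cons False by (simp add: eln_def)
  qed
qed

lemma prod_list_mono_nn:
  "(\<forall>x\<in>set D. 0 \<le> f x \<and> f x \<le> (g x::real)) \<Longrightarrow> prod_list (map f D) \<le> prod_list (map g D)"
proof (induction D)
  case Nil then show ?case by simp
next
  case (Cons a D)
  have "0 \<le> prod_list (map f D)" using Cons.prems by (induction D) auto
  moreover have "prod_list (map f D) \<le> prod_list (map g D)" using Cons by simp
  moreover have "0 \<le> f a" "f a \<le> g a" using Cons.prems by auto
  ultimately show ?case by (simp add: mult_mono)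
qed

lemma prod_list_div:
  "prod_list (map (\<lambda>x. f x / (g x::real)) D) = prod_list (map f D) / prod_list (map g D)"
  by (induction D) auto

lemma log_lemma:
  fixes Ps Pf G :: "'a \<Rightarrow> real"
  assumes h: "\<forall>x\<in>set D. 0 < Ps x \<and> 0 \<le> Pf x \<and> Pf x \<le> G x"
    and lt: "sum_list (map (\<lambda>x. eln (Ps x)) D) + ereal \<beta> < sum_list (map (\<lambda>x. eln (Pf x)) D)"
  shows "exp \<beta> < prod_list (map (\<lambda>x. G x / Ps x) D)"
proof -
  have pos: "\<forall>x\<in>set D. 0 < Pf x"
  proof (rule ccontr)
    assume "\<not> ?thesis"
    then have "\<exists>x\<in>set D. Pf x = 0" using h by force
    then have "sum_list (map (\<lambda>x. eln (Pf x)) D) = -\<infinity>" using h sum_eln_zero[of D Pf] by auto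
    then show False using lt by simp
  qed
  have pS: "0 < prod_list (map Ps D)" using h by (induction D) auto
  have pF: "0 < prod_list (map Pf D)" using pos by (induction D) auto
  have "ln (prod_list (map Ps D)) + \<beta> < ln (prod_list (map Pf D))"
    using lt sum_eln_pos[of D Ps] sum_eln_pos[OF pos] h by auto
  then have "\<beta> < ln (prod_list (map Pf D) / prod_list (map Ps D))"
    using pS pF by (simp add: ln_div)
  then have "exp \<beta> < exp (ln (prod_list (map Pf D) / prod_list (map Ps D)))" by simp
  then have "exp \<beta> < prod_list (map Pf D) / prod_list (map Ps D)"
    using pS pF by simp
  also have "\<dots> \<le> prod_list (map G D) / prod_list (map Ps D)"
    using pS h by (intro divide_right_mono prod_list_mono_nn) auto
  finally show ?thesis by (simp add: prod_list_div)
qed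

lemma ennreal_prod_list:
  "(\<forall>x\<in>set D. 0 \<le> f x) \<Longrightarrow> prod_list (map (\<lambda>x. ennreal (f x)) D) = ennreal (prod_list (map f D))"
proof (induction D)
  case Nil then show ?case by simp
next
  case (Cons a D)
  have "0 \<le> prod_list (map f D)" using Cons.prems by (induction D) auto
  then show ?case using Cons by (simp add: ennreal_mult)
qed

lemma pmf_markov:
  fixes u :: "'a \<Rightarrow> ennreal"
  assumes "(\<integral>\<^sup>+x. u x \<partial>measure_pmf M) \<le> ennreal B" "t > 0" "0 \<le> B"
  shows "measure_pmf.prob M {x. ennreal t \<le> u x} \<le> B / t"
proof -
  let ?S = "{x. ennreal t \<le> u x}"
  have "ennreal t * emeasure (measure_pmf M) ?S = (\<integral>\<^sup>+x. ennreal t * indicator ?S x \<partial>measure_pmf M)"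
    by (simp add: nn_integral_cmult_indicator)
  also have "\<dots> \<le> (\<integral>\<^sup>+x. u x \<partial>measure_pmf M)"
    by (intro nn_integral_mono) (auto split: split_indicator)
  also have "\<dots> \<le> ennreal B" by fact
  finally have "ennreal (t * measure_pmf.prob M ?S) \<le> ennreal B"
    using assms(2) by (simp add: measure_pmf.emeasure_eq_measure ennreal_mult)
  then have "t * measure_pmf.prob M ?S \<le> B"
    using assms(3) by (simp add: ennreal_le_iff)
  then show ?thesis using assms(2) by (simp add: field_simps)
qed



lemma ln_nonneg_nat_div:
  assumes "0 < \<delta>" "\<delta> \<le> 1"
  shows "0 \<le> ln (real n / \<delta>)"
proof (cases "n = 0")
  case True then show ?thesis by simp
next
  case False
  then have "1 \<le> real n" by simp
  also have "real n \<le> real n / \<delta>" using assms \<open>1 \<le> real n\<close> by (simp add: le_divide_eq)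
  finally show ?thesis by simp
qed

lemma main:
  fixes Obs Act :: "nat set" and H K :: nat and UA :: "nat \<Rightarrow> nat list set"
    and r :: "nat \<Rightarrow> nat \<Rightarrow> nat \<Rightarrow> real" and F :: "model set" and fstar :: model
    and sel :: "dataset \<Rightarrow> model \<times> policy" and \<delta> :: real
  defines "\<epsilon>b \<equiv> 1 / (real K * real H * real (UA_size UA H))"
  defines "\<beta> \<equiv> 4 * ln (real (bracket_num Obs Act H F \<epsilon>b) * real K * real H * real (UA_size UA H) / \<delta>)"
  assumes Obs: "finite Obs" and Act: "finite Act" "Act \<noteq> {}"
    and UA: "\<forall>h. finite (UA h) \<and> (\<forall>u\<in>UA h. set u \<subseteq> Act)"
    and vm: "\<forall>f\<in>F. valid_model Obs f" and fs: "fstar \<in> F"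
    and d0: "0 < \<delta>" and d1: "\<delta> \<le> 1"
    and hb: "\<exists>N. has_bracket Obs Act H F \<epsilon>b N"
    and sel: "\<forall>D. valid_policy Act (snd (sel D))"
  shows "measure_pmf.prob (crane_run Act UA H fstar sel K)
        {Ds. \<forall>k\<in>{1..K}. fstar \<in> conf_set H F \<beta> (Ds ! (k - 1))} \<ge> 1 - \<delta> / 2"
proof -
  define N where "N = bracket_num Obs Act H F \<epsilon>b"
  define U where "U = UA_size UA H"
  define m where "m = mlen UA H"
  define X where "X = real N * real K * real H * real U / \<delta>"
  have \<beta>X: "\<beta> = 4 * ln X" unfolding \<beta>_def X_def N_def U_def by simp
  have hbN: "has_bracket Obs Act H F \<epsilon>b N"
    unfolding N_def bracket_num_def by (rule LeastI_ex[OF hb])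
  then obtain g1 g2 :: "nat \<Rightarrow> policy \<Rightarrow> hist \<Rightarrow> real" where
    gw: "\<forall>i<N. \<forall>\<pi>. valid_policy Act \<pi> \<longrightarrow> (\<Sum>\<tau>\<in>trajs Obs Act H. \<bar>g1 i \<pi> \<tau> - g2 i \<pi> \<tau>\<bar>) \<le> \<epsilon>b"
    and gc: "\<forall>f\<in>F. \<exists>i<N. \<forall>\<pi> \<tau>. valid_policy Act \<pi> \<longrightarrow> \<tau> \<in> trajs Obs Act H \<longrightarrow>
           g1 i \<pi> \<tau> \<le> Pr H f \<pi> \<tau> \<and> Pr H f \<pi> \<tau> \<le> g2 i \<pi> \<tau>"
    unfolding has_bracket_def by blast
  have N1: "1 \<le> N" using gc fs by fastforce
  have fin: "finite (trajs Obs Act H)" using finite_trajs[OF Obs Act(1)] .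
  have vmf: "valid_model Obs fstar" using vm fs by blast
  have \<beta>0: "0 \<le> \<beta>" unfolding \<beta>X X_def
    using ln_nonneg_nat_div[OF d0 d1, of "N * K * H * U"] by simp
  have mle: "m \<le> H * U"
  proof -
    have "m = (\<Sum>h\<in>set [0..<H]. card (UA (Suc h)))"
      unfolding m_def mlen_def sum_set_upt_conv_sum_list_nat by (rule refl)
    also have "\<dots> \<le> (\<Sum>h\<in>set [0..<H]. U)"
    proof (intro sum_mono)
      fix h assume "h \<in> set [0..<H]"
      then have "Suc h \<in> {1..H}" by auto
      then show "card (UA (Suc h)) \<le> U" unfolding U_def UA_size_def
        by (intro Max_ge) auto
    qed
    finally show ?thesis by simp
  qed
  define useful where "useful i \<longleftrightarrow> (\<exists>f\<in>F. \<forall>\<pi> \<tau>. valid_policy Act \<pi> \<longrightarrow> \<tau> \<in> trajs Obs Act H \<longrightarrow>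
           g1 i \<pi> \<tau> \<le> Pr H f \<pi> \<tau> \<and> Pr H f \<pi> \<tau> \<le> g2 i \<pi> \<tau>)" for i
  have g2nn: "0 \<le> g2 i \<pi> \<tau>" if hyp: "useful i" "valid_policy Act \<pi>" "\<tau> \<in> trajs Obs Act H" for i \<pi> \<tau>
  proof -
    obtain f where "Pr H f \<pi> \<tau> \<le> g2 i \<pi> \<tau>" using hyp unfolding useful_def by blast
    moreover have "0 \<le> Pr H f \<pi> \<tau>" by (simp add: Pr_def)
    ultimately show ?thesis by linarith
  qed
  have g2sum: "(\<Sum>\<tau>\<in>trajs Obs Act H. g2 i \<pi> \<tau>) \<le> 1 + \<epsilon>b" if hyp: "useful i" "i < N" "valid_policy Act \<pi>" for i \<pi>
  proof -
    obtain f where f: "f \<in> F" and b: "\<And>\<tau>. \<tau> \<in> trajs Obs Act H \<Longrightarrow> g1 i \<pi> \<tau> \<le> Pr H f \<pi> \<tau> \<and> Pr H f \<pi> \<tau> \<le> g2 i \<pi> \<tau>"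
      using hyp unfolding useful_def by blast
    have "(\<Sum>\<tau>\<in>trajs Obs Act H. g2 i \<pi> \<tau>) \<le> (\<Sum>\<tau>\<in>trajs Obs Act H. Pr H f \<pi> \<tau> + \<bar>g1 i \<pi> \<tau> - g2 i \<pi> \<tau>\<bar>)"
      using b by (intro sum_mono) fastforce
    also have "\<dots> = (\<Sum>\<tau>\<in>trajs Obs Act H. Pr H f \<pi> \<tau>) + (\<Sum>\<tau>\<in>trajs Obs Act H. \<bar>g1 i \<pi> \<tau> - g2 i \<pi> \<tau>\<bar>)"
      by (simp add: sum.distrib)
    also have "(\<Sum>\<tau>\<in>trajs Obs Act H. Pr H f \<pi> \<tau>) \<le> 1"
      unfolding Pr_def using measure_measure_pmf_finite[OF fin, of "traj f \<pi> H"]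
      by (metis measure_pmf.prob_le_1)
    also have "(\<Sum>\<tau>\<in>trajs Obs Act H. \<bar>g1 i \<pi> \<tau> - g2 i \<pi> \<tau>\<bar>) \<le> \<epsilon>b"
      using gw hyp by blast
    finally show ?thesis by simp
  qed
  have eb0: "0 \<le> \<epsilon>b" unfolding \<epsilon>b_def by simp
  define w where "w i \<pi> \<tau> = ennreal (g2 i \<pi> \<tau> / Pr H fstar \<pi> \<tau>)" for i \<pi> \<tau>
  define W where "W i D = prod_list (map (\<lambda>(p,\<tau>). w i p \<tau>) D)" for i D
  have Wbound: "(\<integral>\<^sup>+Ds. W i (last Ds) \<partial>measure_pmf (crane_run Act UA H fstar sel j)) \<le> ennreal ((1 + \<epsilon>b) ^ (j * m))"
    if "useful i" "i < N" for i j
  proof -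
    have "(\<integral>\<^sup>+Ds. W i (last Ds) \<partial>measure_pmf (crane_run Act UA H fstar sel j)) \<le> ennreal (1 + \<epsilon>b) ^ (j * m)"
      unfolding W_def m_def
    proof (rule crane_bound[OF sel Act UA])
      fix p assume p: "valid_policy Act p"
      show "(\<integral>\<^sup>+\<tau>. w i p \<tau> \<partial>measure_pmf (traj fstar p H)) \<le> ennreal (1 + \<epsilon>b)"
        unfolding w_def
        by (rule step_bound[OF fin vmf p]) (use g2nn g2sum that p in auto)
    qed
    moreover have "ennreal (1 + \<epsilon>b) ^ (j * m) = ennreal ((1 + \<epsilon>b) ^ (j * m))"
      using eb0 by (intro ennreal_power) simp
    ultimately show ?thesis by simp
  qed
  have powb: "(1 + \<epsilon>b) ^ (j * m) \<le> exp 1" if "j < K" for j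
  proof (cases "j * m = 0")
    case True
    have "(1 + \<epsilon>b) ^ (j * m) = 1" unfolding True by simp
    then show ?thesis by simp
  next
    case False
    then have "0 < m" "0 < j" by auto
    then have "0 < H * U" using mle by linarith
    then have "0 < H" "0 < U" by auto
    moreover have "0 < K" using that by simp
    ultimately have pos: "0 < real K * real H * real U" by simp
    have "real (j * m) \<le> real K * real H * real U"
    proof -
      have "j * m \<le> K * (H * U)" using that mle by (intro mult_mono) auto
      then show ?thesis by (metis of_nat_le_iff of_nat_mult mult.assoc)
    qed
    then have le1: "real (j * m) * \<epsilon>b \<le> 1" unfolding \<epsilon>b_def U_def[symmetric]
      using pos by (simp add: divide_le_eq)
    have "(1 + \<epsilon>b) ^ (j * m) \<le> exp \<epsilon>b ^ (j * m)"
      using eb0 by (intro power_mono) auto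
    also have "\<dots> = exp (real (j * m) * \<epsilon>b)" by (rule exp_of_nat_mult[symmetric])
    also have "\<dots> \<le> exp 1" using le1 by simp
    finally show ?thesis .
  qed
  have perj: "measure_pmf.prob (crane_run Act UA H fstar sel j) {Ds. fstar \<notin> conf_set H F \<beta> (last Ds)} \<le> \<delta> / (2 * K)"
    if jK: "j < K" for j
  proof (cases "j * m = 0")
    case True
    have "{Ds. fstar \<notin> conf_set H F \<beta> (last Ds)} \<inter> set_pmf (crane_run Act UA H fstar sel j) = {}"
    proof -
      have "(SUP x\<in>F. (0::ereal)) = 0" using fs by (intro SUP_const) auto
      then have c: "fstar \<in> conf_set H F \<beta> []" using fs \<beta>0 by (auto simp: conf_set_def loglik_def)
      have "last Ds = []" if "Ds \<in> set_pmf (crane_run Act UA H fstar sel j)" for Ds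
        using crane_support[OF sel Act UA that] True unfolding m_def by auto
      then show ?thesis using c by auto
    qed
    then have "measure_pmf.prob (crane_run Act UA H fstar sel j) {Ds. fstar \<notin> conf_set H F \<beta> (last Ds)} = 0"
      by (metis measure_Int_set_pmf measure_empty)
    then show ?thesis using d0 by simp
  next
    case False
    then have jm: "0 < j" "0 < m" by auto
    then have "0 < H * U" using mle by linarith
    then have HU: "0 < H" "0 < U" by auto
    have K2: "2 \<le> K" using jm jK by simp
    have Xge: "real N * real K / \<delta> \<le> X"
    proof -
      have "1 \<le> H * U" using HU by simp
      then have "real 1 \<le> real (H * U)" by (simp only: of_nat_le_iff)
      then have "1 \<le> real H * real U" by simp
      then have "real N * real K * 1 \<le> real N * real K * (real H * real U)"
        by (intro mult_left_mono) auto
      then show ?thesis unfolding X_def using d0 by (simp add: divide_right_mono mult.assoc)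
    qed
    have NKd: "2 \<le> real N * real K / \<delta>"
    proof -
      have "1 * 2 \<le> N * K" by (rule mult_le_mono[OF N1 K2])
      then have "real (1 * 2) \<le> real (N * K)" by (simp only: of_nat_le_iff)
      then have "2 \<le> real N * real K" by simp
      also have "\<dots> \<le> real N * real K / \<delta>"
      proof -
        have "real N * real K * \<delta> \<le> real N * real K * 1" using d1 by (intro mult_left_mono) auto
        then show ?thesis using d0 by (simp add: le_divide_eq)
      qed
      finally show ?thesis .
    qed
    have Xpos: "0 < X" using Xge NKd by simp
    have expb: "exp \<beta> = X ^ 4"
    proof -
      have "exp \<beta> = exp (real (4::nat) * ln X)" unfolding \<beta>X by simp
      also have "\<dots> = exp (ln X) ^ 4" by (rule exp_of_nat_mult)
      also have "\<dots> = X ^ 4" using Xpos by simp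
      finally show ?thesis .
    qed
    have X3: "8 \<le> X ^ 3"
    proof -
      have "2 ^ 3 \<le> X ^ 3" using Xge NKd by (intro power_mono) auto
      then show ?thesis by simp
    qed
    have key: "real N * exp 1 / exp \<beta> \<le> \<delta> / (2 * K)"
    proof -
      have "2 * exp 1 \<le> (8::real)" using exp_le by linarith
      then have "(2 * exp 1) * (real N * real K) \<le> 8 * (real N * real K)"
        by (intro mult_right_mono) auto
      then have "real N * exp 1 * (2 * K) \<le> 8 * (real N * real K)" by (simp add: mult_ac)
      also have "\<dots> \<le> X ^ 3 * (real N * real K)" using X3 by (intro mult_right_mono) auto
      also have "\<dots> \<le> X ^ 3 * (X * \<delta>)"
        using Xge d0 Xpos by (intro mult_left_mono) (auto simp: divide_le_eq mult.commute)
      also have "\<dots> = exp \<beta> * \<delta>" by (simp add: expb power_numeral_reduce mult_ac)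
      finally show ?thesis using K2 d0 by (simp add: field_simps)
    qed
    define I where "I = {i. i < N \<and> useful i}"
    have loglik_eq: "loglik H f D = sum_list (map (\<lambda>x. eln (Pr H f (fst x) (snd x))) D)" for f D
      unfolding loglik_def by (simp add: split_def)
    have sub: "{Ds. fstar \<notin> conf_set H F \<beta> (last Ds)} \<inter> set_pmf (crane_run Act UA H fstar sel j)
       \<subseteq> (\<Union>i\<in>I. {Ds. ennreal (exp \<beta>) \<le> W i (last Ds)})"
    proof
      fix Ds assume "Ds \<in> {Ds. fstar \<notin> conf_set H F \<beta> (last Ds)} \<inter> set_pmf (crane_run Act UA H fstar sel j)"
      then have bad: "fstar \<notin> conf_set H F \<beta> (last Ds)" and sup: "Ds \<in> set_pmf (crane_run Act UA H fstar sel j)" by auto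
      define D where "D = last Ds"
      have good: "\<forall>x\<in>set D. valid_policy Act (fst x) \<and> snd x \<in> set_pmf (traj fstar (fst x) H)"
        using crane_support[OF sel Act UA sup] unfolding D_def by blast
      have Pspos: "\<forall>x\<in>set D. 0 < Pr H fstar (fst x) (snd x)"
        using good by (auto simp: Pr_def set_pmf_iff pmf_nonneg order.strict_iff_order)
      have intr: "\<forall>x\<in>set D. snd x \<in> trajs Obs Act H"
        using good traj_support[OF vmf] unfolding trajs_def by blast
      define S where "S = (SUP f'\<in>F. loglik H f' D)"
      have L: "loglik H fstar D = ereal (ln (prod_list (map (\<lambda>x. Pr H fstar (fst x) (snd x)) D)))"
        unfolding loglik_eq using sum_eln_pos[OF Pspos] .
      have "\<not> S - ereal \<beta> \<le> loglik H fstar D" using bad fs unfolding conf_set_def S_def D_def by auto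
      then have "loglik H fstar D + ereal \<beta> < S" unfolding L by (cases S) auto
      then obtain f where f: "f \<in> F" and lt: "loglik H fstar D + ereal \<beta> < loglik H f D"
        unfolding S_def by (auto simp: less_SUP_iff)
      obtain i where i: "i < N" and br: "\<forall>\<pi> \<tau>. valid_policy Act \<pi> \<longrightarrow> \<tau> \<in> trajs Obs Act H \<longrightarrow>
           g1 i \<pi> \<tau> \<le> Pr H f \<pi> \<tau> \<and> Pr H f \<pi> \<tau> \<le> g2 i \<pi> \<tau>" using gc f by blast
      have ui: "useful i" unfolding useful_def using f br by blast
      have "exp \<beta> < prod_list (map (\<lambda>x. g2 i (fst x) (snd x) / Pr H fstar (fst x) (snd x)) D)"
      proof (rule log_lemma[where Pf="\<lambda>x. Pr H f (fst x) (snd x)"])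
        show "\<forall>x\<in>set D. 0 < Pr H fstar (fst x) (snd x) \<and> 0 \<le> Pr H f (fst x) (snd x) \<and> Pr H f (fst x) (snd x) \<le> g2 i (fst x) (snd x)"
          using Pspos intr good br by (auto simp: Pr_def)
        show "(\<Sum>x\<leftarrow>D. eln (Pr H fstar (fst x) (snd x))) + ereal \<beta> < (\<Sum>x\<leftarrow>D. eln (Pr H f (fst x) (snd x)))"
          using lt unfolding loglik_eq .
      qed
      moreover have "W i D = ennreal (prod_list (map (\<lambda>x. g2 i (fst x) (snd x) / Pr H fstar (fst x) (snd x)) D))"
      proof -
        have "W i D = prod_list (map (\<lambda>x. ennreal (g2 i (fst x) (snd x) / Pr H fstar (fst x) (snd x))) D)"
          unfolding W_def w_def by (simp add: split_def)
        also have "\<dots> = ennreal (prod_list (map (\<lambda>x. g2 i (fst x) (snd x) / Pr H fstar (fst x) (snd x)) D))"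
        proof (intro ennreal_prod_list ballI divide_nonneg_pos)
          fix x assume x: "x \<in> set D"
          show "0 \<le> g2 i (fst x) (snd x)" using g2nn[OF ui] good intr x by blast
          show "0 < Pr H fstar (fst x) (snd x)" using Pspos x by blast
        qed
        finally show ?thesis .
      qed
      ultimately have "ennreal (exp \<beta>) \<le> W i D" by (simp add: ennreal_leI)
      then show "Ds \<in> (\<Union>i\<in>I. {Ds. ennreal (exp \<beta>) \<le> W i (last Ds)})"
        unfolding I_def D_def using i ui by auto
    qed
    have "measure_pmf.prob (crane_run Act UA H fstar sel j) {Ds. fstar \<notin> conf_set H F \<beta> (last Ds)}
        = measure_pmf.prob (crane_run Act UA H fstar sel j) ({Ds. fstar \<notin> conf_set H F \<beta> (last Ds)} \<inter> set_pmf (crane_run Act UA H fstar sel j))"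
      by (simp add: measure_Int_set_pmf)
    also have "\<dots> \<le> measure_pmf.prob (crane_run Act UA H fstar sel j) (\<Union>i\<in>I. {Ds. ennreal (exp \<beta>) \<le> W i (last Ds)})"
      using sub by (intro measure_pmf.finite_measure_mono) auto
    also have "\<dots> \<le> (\<Sum>i\<in>I. measure_pmf.prob (crane_run Act UA H fstar sel j) {Ds. ennreal (exp \<beta>) \<le> W i (last Ds)})"
      unfolding I_def by (intro measure_pmf.finite_measure_subadditive_finite) auto
    also have "\<dots> \<le> (\<Sum>i\<in>I. exp 1 / exp \<beta>)"
    proof (intro sum_mono)
      fix i assume "i \<in> I"
      then have ui: "useful i" "i < N" unfolding I_def by auto
      have "(\<integral>\<^sup>+Ds. W i (last Ds) \<partial>measure_pmf (crane_run Act UA H fstar sel j)) \<le> ennreal (exp 1)"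
        using Wbound[OF ui, of j] powb[OF jK] by (meson ennreal_leI order.trans)
      then show "measure_pmf.prob (crane_run Act UA H fstar sel j) {Ds. ennreal (exp \<beta>) \<le> W i (last Ds)} \<le> exp 1 / exp \<beta>"
        by (intro pmf_markov) auto
    qed
    also have "\<dots> = real (card I) * exp 1 / exp \<beta>" by simp
    also have "\<dots> \<le> real N * exp 1 / exp \<beta>"
    proof -
      have "card I \<le> N" unfolding I_def using card_mono[of "{..<N}" "{i. i < N \<and> useful i}"] by auto
      then show ?thesis by (intro divide_right_mono mult_right_mono) auto
    qed
    also have "\<dots> \<le> \<delta> / (2 * K)" by (rule key)
    finally show ?thesis .
  qed

  show ?thesis
  proof (cases "K = 0")
    case True
    then show ?thesis using d0 by simp
  next
    case False
    define B where "B k = {Ds. fstar \<notin> conf_set H F \<beta> (Ds ! (k - 1))}" for k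
    have eqs: "{Ds. \<forall>k\<in>{1..K}. fstar \<in> conf_set H F \<beta> (Ds ! (k - 1))} = space (measure_pmf (crane_run Act UA H fstar sel K)) - (\<Union>k\<in>{1..K}. B k)"
      unfolding B_def by auto
    have Bk: "measure_pmf.prob (crane_run Act UA H fstar sel K) (B k) \<le> \<delta> / (2 * K)" if "k \<in> {1..K}" for k
    proof -
      have "measure_pmf.prob (crane_run Act UA H fstar sel K) (B k)
          = measure_pmf.prob (map_pmf (\<lambda>Ds. Ds ! (k - 1)) (crane_run Act UA H fstar sel K)) {D. fstar \<notin> conf_set H F \<beta> D}"
        unfolding B_def by (simp add: vimage_def)
      also have "\<dots> = measure_pmf.prob (map_pmf last (crane_run Act UA H fstar sel (k - 1))) {D. fstar \<notin> conf_set H F \<beta> D}"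
        using that by (subst crane_prefix) auto
      also have "\<dots> = measure_pmf.prob (crane_run Act UA H fstar sel (k - 1)) {Ds. fstar \<notin> conf_set H F \<beta> (last Ds)}"
        by (simp add: vimage_def)
      also have "\<dots> \<le> \<delta> / (2 * K)" using that by (intro perj) auto
      finally show ?thesis .
    qed
    have "measure_pmf.prob (crane_run Act UA H fstar sel K) (\<Union>k\<in>{1..K}. B k) \<le> (\<Sum>k\<in>{1..K}. measure_pmf.prob (crane_run Act UA H fstar sel K) (B k))"
      by (intro measure_pmf.finite_measure_subadditive_finite) auto
    also have "\<dots> \<le> (\<Sum>k\<in>{1..K}. \<delta> / (2 * K))" using Bk by (intro sum_mono) auto
    also have "\<dots> = \<delta> / 2" using False by simp
    finally have u: "measure_pmf.prob (crane_run Act UA H fstar sel K) (\<Union>k\<in>{1..K}. B k) \<le> \<delta> / 2" .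
    show ?thesis unfolding eqs
      using measure_pmf.prob_compl[of "\<Union>k\<in>{1..K}. B k" "crane_run Act UA H fstar sel K"] u by simp
  qed
qed


theorem lemma7:
  "\<exists>c>0. \<forall>(Obs :: nat set) (Act :: nat set) (H :: nat) (K :: nat) (UA :: nat \<Rightarrow> nat list set)
          (r :: nat \<Rightarrow> nat \<Rightarrow> nat \<Rightarrow> real) (F :: model set) (fstar :: model)
          (sel :: dataset \<Rightarrow> model \<times> policy) (\<delta> :: real).
     let \<epsilon>b = 1 / (real K * real H * real (UA_size UA H));
         \<beta> = c * ln (real (bracket_num Obs Act H F \<epsilon>b) * real K * real H
                      * real (UA_size UA H) / \<delta>)
     in
     finite Obs \<and> Obs \<noteq> {} \<and> finite Act \<and> Act \<noteq> {} \<and>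
     (\<forall>h. finite (UA h) \<and> (\<forall>u\<in>UA h. set u \<subseteq> Act)) \<and>
     (\<forall>f\<in>F. valid_model Obs f) \<and> fstar \<in> F \<and>
     0 < \<delta> \<and> \<delta> \<le> 1 \<and>
     (\<exists>N. has_bracket Obs Act H F \<epsilon>b N) \<and>
     (\<forall>D. fst (sel D) \<in> conf_set H F \<beta> D \<and> valid_policy Act (snd (sel D)) \<and>
          (\<forall>f\<in>conf_set H F \<beta> D. \<forall>\<pi>. valid_policy Act \<pi> \<longrightarrow>
              Val H r f \<pi> \<le> Val H r (fst (sel D)) (snd (sel D))))
     \<longrightarrow>
     measure_pmf.prob (crane_run Act UA H fstar sel K)
        {Ds. \<forall>k\<in>{1..K}. fstar \<in> conf_set H F \<beta> (Ds ! (k - 1))} \<ge> 1 - \<delta> / 2"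
  proof (intro exI[of _ "4::real"] conjI allI)
  show "(0::real) < 4" by simp
next
  fix Obs Act :: "nat set" and H K :: nat and UA :: "nat \<Rightarrow> nat list set"
    and r :: "nat \<Rightarrow> nat \<Rightarrow> nat \<Rightarrow> real" and F :: "model set" and fstar :: model
    and sel :: "dataset \<Rightarrow> model \<times> policy" and \<delta> :: real
  show "let \<epsilon>b = 1 / (real K * real H * real (UA_size UA H));
         \<beta> = 4 * ln (real (bracket_num Obs Act H F \<epsilon>b) * real K * real H
                      * real (UA_size UA H) / \<delta>)
     in
     finite Obs \<and> Obs \<noteq> {} \<and> finite Act \<and> Act \<noteq> {} \<and>
     (\<forall>h. finite (UA h) \<and> (\<forall>u\<in>UA h. set u \<subseteq> Act)) \<and>
     (\<forall>f\<in>F. valid_model Obs f) \<and> fstar \<in> F \<and>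
     0 < \<delta> \<and> \<delta> \<le> 1 \<and>
     (\<exists>N. has_bracket Obs Act H F \<epsilon>b N) \<and>
     (\<forall>D. fst (sel D) \<in> conf_set H F \<beta> D \<and> valid_policy Act (snd (sel D)) \<and>
          (\<forall>f\<in>conf_set H F \<beta> D. \<forall>\<pi>. valid_policy Act \<pi> \<longrightarrow>
              Val H r f \<pi> \<le> Val H r (fst (sel D)) (snd (sel D))))
     \<longrightarrow>
     measure_pmf.prob (crane_run Act UA H fstar sel K)
        {Ds. \<forall>k\<in>{1..K}. fstar \<in> conf_set H F \<beta> (Ds ! (k - 1))} \<ge> 1 - \<delta> / 2"
    unfolding Let_def
  proof (intro impI)
    assume h: "finite Obs \<and> Obs \<noteq> {} \<and> finite Act \<and> Act \<noteq> {} \<and>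
     (\<forall>h. finite (UA h) \<and> (\<forall>u\<in>UA h. set u \<subseteq> Act)) \<and>
     (\<forall>f\<in>F. valid_model Obs f) \<and> fstar \<in> F \<and>
     0 < \<delta> \<and> \<delta> \<le> 1 \<and>
     (\<exists>N. has_bracket Obs Act H F (1 / (real K * real H * real (UA_size UA H))) N) \<and>
     (\<forall>D. fst (sel D) \<in> conf_set H F (4 * ln (real (bracket_num Obs Act H F (1 / (real K * real H * real (UA_size UA H)))) * real K * real H
                      * real (UA_size UA H) / \<delta>)) D \<and> valid_policy Act (snd (sel D)) \<and>
          (\<forall>f\<in>conf_set H F (4 * ln (real (bracket_num Obs Act H F (1 / (real K * real H * real (UA_size UA H)))) * real K * real H
                      * real (UA_size UA H) / \<delta>)) D. \<forall>\<pi>. valid_policy Act \<pi> \<longrightarrow>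
              Val H r f \<pi> \<le> Val H r (fst (sel D)) (snd (sel D))))"
    show "measure_pmf.prob (crane_run Act UA H fstar sel K)
        {Ds. \<forall>k\<in>{1..K}. fstar \<in> conf_set H F (4 * ln (real (bracket_num Obs Act H F (1 / (real K * real H * real (UA_size UA H)))) * real K * real H
                      * real (UA_size UA H) / \<delta>)) (Ds ! (k - 1))} \<ge> 1 - \<delta> / 2"
      by (rule main) (use h in auto)
  qed
qed

end
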